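(* Let $A$ be a Boolean algebra and $B$ a Boolean $\sigma$-algebra. Then every Boolean algebra homomorphism $\phi\colon A\to B$ extends uniquely, along the natural inclusion $A\hookrightarrow A^\infty$, to a $\sigma$-homomorphism $\Phi\colon A^\infty\to B$.
   Context: A Boolean $\sigma$-algebra is a Boolean algebra with all countable suprema and infima; a $\sigma$-homomorphism between Boolean $\sigma$-algebras is a Boolean homomorphism preserving countable suprema. For a compact Hausdorff space $X$, the Baire $\sigma$-algebra $\mathsf{Baire}(X)$ is the smallest $\sigma$-algebra on $X$ making all continuous functions $X\to\mathbb{R}$ measurable. The Baire envelope of a Boolean algebra $A$ is $A^\infty:=\mathsf{Baire}(\mathrm{Stone}(A))$, where $\mathrm{Stone}(A)$ is the Stone space; the natural inclusion $A\hookrightarrow A^\infty$ identifies each element of $A$ with the corresponding clopen subset of $\mathrm{Stone}(A)$. *)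

theory Defs
  imports "HOL-Analysis.Analysis"
begin

definition is_lub_of :: "'b::order set \<Rightarrow> 'b \<Rightarrow> bool" where
  "is_lub_of S s \<longleftrightarrow> (\<forall>x\<in>S. x \<le> s) \<and> (\<forall>u. (\<forall>x\<in>S. x \<le> u) \<longrightarrow> s \<le> u)"

text \<open>A Boolean sigma-algebra: a Boolean algebra in which every countable set has a supremum
  (countable infima then exist by complementation).\<close>
definition boolean_sigma_algebra :: "'b::boolean_algebra itself \<Rightarrow> bool" where
  "boolean_sigma_algebra _ \<longleftrightarrow> (\<forall>S::'b set. countable S \<longrightarrow> (\<exists>s. is_lub_of S s))"

definition ba_hom :: "('a::boolean_algebra \<Rightarrow> 'b::boolean_algebra) \<Rightarrow> bool" where
  "ba_hom f \<longleftrightarrow> (\<forall>x y. f (sup x y) = sup (f x) (f y)) \<and> (\<forall>x y. f (inf x y) = inf (f x) (f y))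
     \<and> (\<forall>x. f (- x) = - f x) \<and> f bot = bot \<and> f top = top"

definition ultrafilter_ba :: "'a::boolean_algebra set \<Rightarrow> bool" where
  "ultrafilter_ba U \<longleftrightarrow> top \<in> U \<and> bot \<notin> U
     \<and> (\<forall>x y. x \<in> U \<and> x \<le> y \<longrightarrow> y \<in> U)
     \<and> (\<forall>x y. x \<in> U \<and> y \<in> U \<longrightarrow> inf x y \<in> U)
     \<and> (\<forall>x. x \<in> U \<or> - x \<in> U)"

definition stone_set :: "'a::boolean_algebra \<Rightarrow> 'a set set" where
  "stone_set a = {U. ultrafilter_ba U \<and> a \<in> U}"

definition stone_space :: "'a::boolean_algebra itself \<Rightarrow> 'a set topology" where
  "stone_space _ = topology_generated_by (range (stone_set :: 'a \<Rightarrow> 'a set set))"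

text \<open>Baire sigma-algebra of a topological space: the smallest sigma-algebra on the space
  making all continuous real-valued functions measurable, i.e. generated by the preimages
  of open subsets of the reals under continuous maps.\<close>
definition Baire :: "'x topology \<Rightarrow> 'x set set" where
  "Baire X = sigma_sets (topspace X)
     {{x \<in> topspace X. f x \<in> S} | f S. continuous_map X euclideanreal f \<and> open S}"

definition baire_envelope :: "'a::boolean_algebra itself \<Rightarrow> 'a set set set" where
  "baire_envelope T = Baire (stone_space T)"

definition sigma_hom :: "'x set \<Rightarrow> 'x set set \<Rightarrow> ('x set \<Rightarrow> 'b::boolean_algebra) \<Rightarrow> bool" where
  "sigma_hom \<Omega> M F \<longleftrightarrow>
     (\<forall>X\<in>M. \<forall>Y\<in>M. F (X \<union> Y) = sup (F X) (F Y)) \<and>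
     (\<forall>X\<in>M. \<forall>Y\<in>M. F (X \<inter> Y) = inf (F X) (F Y)) \<and>
     (\<forall>X\<in>M. F (\<Omega> - X) = - F X) \<and> F {} = bot \<and> F \<Omega> = top \<and>
     (\<forall>C. countable C \<and> C \<subseteq> M \<longrightarrow> is_lub_of (F ` C) (F (\<Union>C)))"

end

theory Submission
  imports Defs
begin

definition pfilter :: "'a::boolean_algebra set \<Rightarrow> bool" where
  "pfilter F \<longleftrightarrow> top \<in> F \<and> bot \<notin> F \<and> (\<forall>x y. x \<in> F \<and> x \<le> y \<longrightarrow> y \<in> F)
     \<and> (\<forall>x y. x \<in> F \<and> y \<in> F \<longrightarrow> inf x y \<in> F)"

lemma uf_compl: "ultrafilter_ba U \<Longrightarrow> (- x \<in> U) = (x \<notin> U)"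
  unfolding ultrafilter_ba_def by (metis inf_compl_bot)

lemma uf_inf: "ultrafilter_ba U \<Longrightarrow> (inf x y \<in> U) = (x \<in> U \<and> y \<in> U)"
  unfolding ultrafilter_ba_def by (meson inf.cobounded1 inf.cobounded2)

lemma uf_sup: "ultrafilter_ba U \<Longrightarrow> (sup x y \<in> U) = (x \<in> U \<or> y \<in> U)"
proof -
  assume u: "ultrafilter_ba U"
  have "(sup x y \<in> U) = (- inf (- x) (- y) \<in> U)" by simp
  also have "\<dots> = (\<not> (- x \<in> U \<and> - y \<in> U))" using uf_compl[OF u, of "inf (- x) (- y)"] uf_inf[OF u, of "- x" "- y"] by blast
  also have "\<dots> = (x \<in> U \<or> y \<in> U)" using uf_compl[OF u] by simp
  finally show ?thesis .
qed

lemma uf_mono: "ultrafilter_ba U \<Longrightarrow> x \<in> U \<Longrightarrow> x \<le> y \<Longrightarrow> y \<in> U"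
  unfolding ultrafilter_ba_def by blast

lemma uf_top: "ultrafilter_ba U \<Longrightarrow> top \<in> U"
  unfolding ultrafilter_ba_def by blast
lemma uf_bot: "ultrafilter_ba U \<Longrightarrow> bot \<notin> U"
  unfolding ultrafilter_ba_def by blast

lemma ss_inf: "stone_set (inf x y) = stone_set x \<inter> stone_set y"
  unfolding stone_set_def using uf_inf by blast
lemma ss_sup: "stone_set (sup x y) = stone_set x \<union> stone_set y"
  unfolding stone_set_def using uf_sup by blast
lemma ss_compl: "stone_set (- x) = {U. ultrafilter_ba U} - stone_set x"
  unfolding stone_set_def using uf_compl by blast
lemma ss_bot: "stone_set bot = {}"
  unfolding stone_set_def using uf_bot by blast
lemma ss_top: "stone_set top = {U. ultrafilter_ba U}"
  unfolding stone_set_def using uf_top by blast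
lemma ss_mono: "x \<le> y \<Longrightarrow> stone_set x \<subseteq> stone_set y"
  unfolding stone_set_def using uf_mono by blast
lemma ss_sub: "stone_set x \<subseteq> {U. ultrafilter_ba U}"
  unfolding stone_set_def by blast

lemma uf_extend:
  assumes "pfilter F"
  shows "\<exists>U. ultrafilter_ba U \<and> F \<subseteq> U"
proof -
  let ?A = "{G. pfilter G \<and> F \<subseteq> G}"
  have "\<forall>C\<in>chains ?A. \<exists>U\<in>?A. \<forall>X\<in>C. X \<subseteq> U"
  proof
    fix C assume C: "C \<in> chains ?A"
    show "\<exists>U\<in>?A. \<forall>X\<in>C. X \<subseteq> U"
    proof (cases "C = {}")
      case True then show ?thesis using assms by blast
    next
      case False
      have CA: "C \<subseteq> ?A" and ch: "\<forall>A\<in>C. \<forall>B\<in>C. A \<subseteq> B \<or> B \<subseteq> A"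
        using C unfolding chains_def chain_subset_def by auto
      have "pfilter (\<Union>C)"
        unfolding pfilter_def
      proof (intro conjI allI impI)
        show "top \<in> \<Union>C" using False CA unfolding pfilter_def by blast
        show "bot \<notin> \<Union>C" using CA unfolding pfilter_def by blast
        fix x y
        show "x \<in> \<Union>C \<and> x \<le> y \<Longrightarrow> y \<in> \<Union>C" using CA unfolding pfilter_def by blast
        assume "x \<in> \<Union>C \<and> y \<in> \<Union>C"
        then obtain A B where AB: "A \<in> C" "B \<in> C" "x \<in> A" "y \<in> B" by blast
        from ch AB(1,2) have "A \<subseteq> B \<or> B \<subseteq> A" by blast
        then show "inf x y \<in> \<Union>C"
        proof
          assume "A \<subseteq> B" then show ?thesis using AB CA unfolding pfilter_def by blast
        next
          assume "B \<subseteq> A" then show ?thesis using AB CA unfolding pfilter_def by blast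
        qed
      qed
      moreover have "F \<subseteq> \<Union>C" using False CA by blast
      ultimately show ?thesis by blast
    qed
  qed
  from Zorn_Lemma2[OF this] obtain M where M: "M \<in> ?A" and max: "\<forall>X\<in>?A. M \<subseteq> X \<longrightarrow> X = M"
    by blast
  have pM: "pfilter M" and FM: "F \<subseteq> M" using M by auto
  have "\<forall>x. x \<in> M \<or> - x \<in> M"
  proof (rule ccontr)
    assume "\<not> (\<forall>x. x \<in> M \<or> - x \<in> M)"
    then obtain x where x: "x \<notin> M" "- x \<notin> M" by blast
    let ?M' = "{y. \<exists>m\<in>M. inf m x \<le> y}"
    have "pfilter ?M'"
      unfolding pfilter_def
    proof (intro conjI allI impI)
      have "top \<in> M" using pM unfolding pfilter_def by blast
      then show "top \<in> ?M'" by auto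
      show "bot \<notin> ?M'"
      proof
        assume "bot \<in> ?M'"
        then obtain m where "m \<in> M" "inf m x \<le> bot" by blast
        then have "m \<le> - x" by (metis inf_shunt bot_unique)
        then show False using \<open>m \<in> M\<close> x pM unfolding pfilter_def by blast
      qed
      fix a b
      show "a \<in> ?M' \<and> a \<le> b \<Longrightarrow> b \<in> ?M'" by (auto intro: order_trans)
      assume "a \<in> ?M' \<and> b \<in> ?M'"
      then obtain m m' where "m \<in> M" "m' \<in> M" "inf m x \<le> a" "inf m' x \<le> b" by blast
      moreover have "inf (inf m m') x \<le> inf a b"
      proof -
        have "inf (inf m m') x \<le> inf m x" by (simp add: le_infI1 inf_mono)
        moreover have "inf (inf m m') x \<le> inf m' x" by (simp add: le_infI1 inf_mono)
        ultimately show ?thesis using \<open>inf m x \<le> a\<close> \<open>inf m' x \<le> b\<close> by (meson le_inf_iff order_trans)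
      qed
      moreover have "inf m m' \<in> M" using calculation pM unfolding pfilter_def by blast
      ultimately show "inf a b \<in> ?M'" by blast
    qed
    moreover have "M \<subseteq> ?M'" by (auto intro: order_trans[OF inf.cobounded1])
    moreover have "x \<in> ?M'"
    proof -
      have "top \<in> M" using pM unfolding pfilter_def by blast
      then show ?thesis by force
    qed
    ultimately show False using max FM x by blast
  qed
  then have "ultrafilter_ba M" using pM unfolding pfilter_def ultrafilter_ba_def by blast
  then show ?thesis using FM by blast
qed


abbreviation UFS :: "'a::boolean_algebra itself \<Rightarrow> 'a set set" where
  "UFS T \<equiv> {U. ultrafilter_ba U}"

lemma top_stone: "topspace (stone_space TYPE('a::boolean_algebra)) = {U::'a set. ultrafilter_ba U}"
proof -
  have "\<Union> (range (stone_set :: 'a \<Rightarrow> _)) = {U::'a set. ultrafilter_ba U}"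
    using ss_sub ss_top by blast
  then show ?thesis unfolding stone_space_def by simp
qed

lemma open_ss: "openin (stone_space TYPE('a::boolean_algebra)) (stone_set (a::'a))"
  unfolding stone_space_def by (rule topology_generated_by_Basis) simp

lemma open_basis:
  assumes "openin (stone_space TYPE('a::boolean_algebra)) Op" "x \<in> Op"
  shows "\<exists>a::'a. x \<in> stone_set a \<and> stone_set a \<subseteq> Op"
proof -
  have "generate_topology_on (range (stone_set :: 'a \<Rightarrow> _)) Op"
    using assms(1) unfolding stone_space_def by (rule openin_topology_generated_by)
  then show ?thesis using assms(2)
  proof (induction arbitrary: x)
    case Empty then show ?case by simp
  next
    case (Int a b)
    then obtain p q where "x \<in> stone_set p" "stone_set p \<subseteq> a" "x \<in> stone_set q" "stone_set q \<subseteq> b"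
      by blast
    then show ?case by (intro exI[of _ "inf p q"]) (auto simp: ss_inf)
  next
    case (UN K)
    then show ?case by blast
  next
    case (Basis s)
    then show ?case by blast
  qed
qed

lemma sep:
  assumes K: "closedin (stone_space TYPE('a::boolean_algebra)) K"
    and Op: "openin (stone_space TYPE('a)) Op" and KO: "K \<subseteq> Op"
  shows "\<exists>a::'a. K \<subseteq> stone_set a \<and> stone_set a \<subseteq> Op"
proof -
  let ?X = "stone_space TYPE('a)"
  define W where "W = topspace ?X - K"
  have W: "openin ?X W" using K unfolding W_def closedin_def by blast
  have cover: "topspace ?X \<subseteq> Op \<union> W" using KO unfolding W_def by blast
  have "\<exists>a c::'a. stone_set a \<subseteq> Op \<and> stone_set c \<subseteq> W \<and> sup a c = top"
  proof (rule ccontr)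
    assume nex: "\<not> ?thesis"
    define F where "F = {x::'a. \<exists>a c. stone_set a \<subseteq> Op \<and> stone_set c \<subseteq> W \<and> - (sup a c) \<le> x}"
    have "pfilter F" unfolding pfilter_def
    proof (intro conjI allI impI)
      show "top \<in> F" unfolding F_def by (intro CollectI exI[of _ bot]) (simp add: ss_bot)
      show "bot \<notin> F"
      proof
        assume "bot \<in> F"
        then obtain a c where ac: "stone_set a \<subseteq> Op" "stone_set c \<subseteq> W" "- (sup a c) \<le> (bot::'a)"
          unfolding F_def by blast
        then have "sup a c = top" by (metis bot_unique compl_bot_eq double_compl)
        then show False using nex ac by blast
      qed
      fix x y :: 'a
      show "x \<in> F \<and> x \<le> y \<Longrightarrow> y \<in> F" unfolding F_def by (auto intro: order_trans)
      assume "x \<in> F \<and> y \<in> F"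
      then obtain a c a' c' where ac: "stone_set a \<subseteq> Op" "stone_set c \<subseteq> W" "- (sup a c) \<le> x"
        "stone_set a' \<subseteq> Op" "stone_set c' \<subseteq> W" "- (sup a' c') \<le> y"
        unfolding F_def by blast
      have "sup a c \<le> sup (sup a a') (sup c c')" by (metis sup_ge1 sup_mono)
      then have 1: "- (sup (sup a a') (sup c c')) \<le> x" using ac(3) by (meson compl_mono order_trans)
      have "sup a' c' \<le> sup (sup a a') (sup c c')" by (metis sup_ge2 sup_mono)
      then have 2: "- (sup (sup a a') (sup c c')) \<le> y" using ac(6) by (meson compl_mono order_trans)
      from 1 2 have "- (sup (sup a a') (sup c c')) \<le> inf x y" by (rule le_infI)
      moreover have "stone_set (sup a a') \<subseteq> Op" "stone_set (sup c c') \<subseteq> W"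
        using ac by (auto simp: ss_sup)
      ultimately show "inf x y \<in> F" unfolding F_def by blast
    qed
    then obtain U where U: "ultrafilter_ba U" "F \<subseteq> U" using uf_extend by blast
    then have "U \<in> topspace ?X" by (simp add: top_stone)
    then have "U \<in> Op \<or> U \<in> W" using cover by blast
    then show False
    proof
      assume "U \<in> Op"
      then obtain a where a: "U \<in> stone_set a" "stone_set a \<subseteq> Op" using open_basis[OF Op] by blast
      have "- a \<in> F" unfolding F_def using a(2) by (intro CollectI exI[of _ a] exI[of _ bot]) (simp add: ss_bot)
      then show False using a(1) U uf_compl[OF U(1), of a] unfolding stone_set_def by blast
    next
      assume "U \<in> W"
      then obtain a where a: "U \<in> stone_set a" "stone_set a \<subseteq> W" using open_basis[OF W] by blast
      have "- a \<in> F" unfolding F_def using a(2) by (intro CollectI exI[of _ bot] exI[of _ a]) (simp add: ss_bot)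
      then show False using a(1) U uf_compl[OF U(1), of a] unfolding stone_set_def by blast
    qed
  qed
  then obtain a c :: 'a where ac: "stone_set a \<subseteq> Op" "stone_set c \<subseteq> W" "sup a c = top" by blast
  have "K \<subseteq> stone_set a"
  proof
    fix x assume x: "x \<in> K"
    then have ux: "ultrafilter_ba x" using K closedin_subset top_stone by blast
    then have "sup a c \<in> x" using ac(3) uf_top by metis
    then have "a \<in> x \<or> c \<in> x" using uf_sup[OF ux] by blast
    moreover have "x \<notin> stone_set c" using ac(2) x unfolding W_def by blast
    ultimately show "x \<in> stone_set a" using ux unfolding stone_set_def by blast
  qed
  then show ?thesis using ac(1) by blast
qed

lemma baire_eq:
  "baire_envelope TYPE('a::boolean_algebra) = sigma_sets {U::'a set. ultrafilter_ba U} (range stone_set)"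
proof
  let ?X = "stone_space TYPE('a)"
  let ?S = "{U::'a set. ultrafilter_ba U}"
  let ?G = "{{x \<in> topspace ?X. f x \<in> S} | f S. continuous_map ?X euclideanreal f \<and> open S}"
  have B: "baire_envelope TYPE('a) = sigma_sets ?S ?G"
    unfolding baire_envelope_def Baire_def top_stone ..
  have "?G \<subseteq> sigma_sets ?S (range stone_set)"
  proof
    fix P assume "P \<in> ?G"
    then obtain f T where P: "P = {x \<in> topspace ?X. f x \<in> T}" and f: "continuous_map ?X euclideanreal f"
      and T: "open T" by blast
    show "P \<in> sigma_sets ?S (range stone_set)"
    proof (cases "T = UNIV")
      case True
      then have "P = stone_set top" using P by (simp add: ss_top top_stone)
      then show ?thesis by blast
    next
      case False
      define C where "C n = {y. inverse (real (Suc n)) \<le> infdist y (- T)}" for n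
      have Cc: "closed (C n)" for n unfolding C_def
        by (rule closed_Collect_le[OF continuous_on_const continuous_on_infdist[OF continuous_on_id]])
      have CT: "C n \<subseteq> T" for n
      proof
        fix y assume "y \<in> C n"
        then have i: "inverse (real (Suc n)) \<le> infdist y (- T)" unfolding C_def by simp
        have "0 < inverse (real (Suc n))" by simp
        with i have "0 < infdist y (- T)" by linarith
        then show "y \<in> T" by (metis ComplI infdist_zero less_irrefl)
      qed
      have PO: "openin ?X P" unfolding P using f T by (simp add: openin_continuous_map_preimage)
      have "\<exists>a::'a. {x \<in> topspace ?X. f x \<in> C n} \<subseteq> stone_set a \<and> stone_set a \<subseteq> P" for n
      proof (rule sep)
        show "closedin ?X {x \<in> topspace ?X. f x \<in> C n}"
          using f Cc by (simp add: closedin_continuous_map_preimage)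
        show "openin ?X P" by (fact PO)
        show "{x \<in> topspace ?X. f x \<in> C n} \<subseteq> P" using CT P by blast
      qed
      then obtain a :: "nat \<Rightarrow> 'a" where a: "\<And>n. {x \<in> topspace ?X. f x \<in> C n} \<subseteq> stone_set (a n)"
        "\<And>n. stone_set (a n) \<subseteq> P" by metis
      have "P = (\<Union>n. stone_set (a n))"
      proof
        show "(\<Union>n. stone_set (a n)) \<subseteq> P" using a(2) by blast
        show "P \<subseteq> (\<Union>n. stone_set (a n))"
        proof
          fix x assume x: "x \<in> P"
          then have "f x \<in> T" using P by blast
          then have "0 < infdist (f x) (- T)"
            using False T by (intro infdist_pos_not_in_closed) (auto simp: closed_Compl)
          then obtain n where "inverse (real (Suc n)) < infdist (f x) (- T)"
            using reals_Archimedean by blast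
          then have "x \<in> {x \<in> topspace ?X. f x \<in> C n}" using x P unfolding C_def by auto
          then show "x \<in> (\<Union>n. stone_set (a n))" using a(1) by blast
        qed
      qed
      then show ?thesis by (auto intro: sigma_sets.Union)
    qed
  qed
  then show "baire_envelope TYPE('a) \<subseteq> sigma_sets ?S (range stone_set)"
    unfolding B by (rule sigma_sets_mono)
  have "range (stone_set :: 'a \<Rightarrow> _) \<subseteq> ?G"
  proof
    fix P assume "P \<in> range (stone_set :: 'a \<Rightarrow> _)"
    then obtain a :: 'a where Pa: "P = stone_set a" by blast
    define f where "f x = (if x \<in> stone_set a then 1 else 0::real)" for x
    have pre: "{x \<in> topspace ?X. f x \<in> U} = (if 1 \<in> U then stone_set a else {}) \<union> (if 0 \<in> U then stone_set (- a) else {})" for U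
      unfolding f_def top_stone ss_compl using ss_sub by auto
    have "continuous_map ?X euclideanreal f"
      unfolding continuous_map_def
    proof (intro conjI allI impI)
      show "f \<in> topspace ?X \<rightarrow> topspace euclideanreal" by simp
      fix U :: "real set"
      show "openin ?X {x \<in> topspace ?X. f x \<in> U}" unfolding pre
        by (intro openin_Un) (auto simp: open_ss)
    qed
    moreover have "P = {x \<in> topspace ?X. f x \<in> {0<..}}" unfolding Pa f_def top_stone using ss_sub by auto
    ultimately have "\<exists>g S. P = {x \<in> topspace ?X. g x \<in> S} \<and> continuous_map ?X euclideanreal g \<and> open S"
      by (intro exI[of _ f] exI[of _ "{0<..}::real set"]) simp
    then show "P \<in> ?G" by (simp only: mem_Collect_eq)
  qed
  then show "sigma_sets ?S (range stone_set) \<subseteq> baire_envelope TYPE('a)"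
    unfolding B by (intro sigma_sets_mono') 
qed


definition lubs :: "(nat \<Rightarrow> 'b::boolean_algebra) \<Rightarrow> 'b" where
  "lubs bs = (SOME l. is_lub_of (range bs) l)"

lemma lubs:
  assumes "boolean_sigma_algebra TYPE('b::boolean_algebra)"
  shows "is_lub_of (range (bs :: nat \<Rightarrow> 'b)) (lubs bs)"
proof -
  have "countable (range bs)" by simp
  then have "\<exists>l. is_lub_of (range bs) l" using assms unfolding boolean_sigma_algebra_def by (rule_tac allE) auto
  then show ?thesis unfolding lubs_def by (rule someI_ex)
qed

lemma lub_unique: "is_lub_of S (x::'b::order) \<Longrightarrow> is_lub_of S y \<Longrightarrow> x = y"
  unfolding is_lub_of_def by (meson order_antisym)

definition Dset :: "(nat \<Rightarrow> 'b::boolean_algebra) \<Rightarrow> 'b set set" where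
  "Dset bs = stone_set (lubs bs) - (\<Union>n. stone_set (bs n))"

definition nullB :: "'b::boolean_algebra set set \<Rightarrow> bool" where
  "nullB Y \<longleftrightarrow> (\<exists>bss::nat \<Rightarrow> nat \<Rightarrow> 'b. Y \<subseteq> (\<Union>n. Dset (bss n)))"

lemma null_sub: "Y \<subseteq> Z \<Longrightarrow> nullB Z \<Longrightarrow> nullB Y"
  unfolding nullB_def by blast

lemma null_empty: "nullB {}"
  unfolding nullB_def by blast

lemma null_D: "nullB (Dset bs)"
  unfolding nullB_def by (intro exI[of _ "\<lambda>_. bs"]) blast

lemma null_UN:
  fixes Y :: "nat \<Rightarrow> 'b::boolean_algebra set set"
  assumes "\<And>n. nullB (Y n)"
  shows "nullB (\<Union>n. Y n)"
proof -
  from assms obtain B :: "nat \<Rightarrow> nat \<Rightarrow> nat \<Rightarrow> 'b" where B: "\<And>n. Y n \<subseteq> (\<Union>m. Dset (B n m))"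
    unfolding nullB_def by metis
  define bss where "bss k = B (fst (prod_decode k)) (snd (prod_decode k))" for k
  have "(\<Union>n. Y n) \<subseteq> (\<Union>k. Dset (bss k))"
  proof
    fix x assume "x \<in> (\<Union>n. Y n)"
    then obtain n m where "x \<in> Dset (B n m)" using B by blast
    moreover have "bss (prod_encode (n, m)) = B n m" unfolding bss_def by simp
    ultimately show "x \<in> (\<Union>k. Dset (bss k))" by (metis UN_I UNIV_I)
  qed
  then show ?thesis unfolding nullB_def by blast
qed

lemma null_Un:
  assumes "nullB Y" "nullB Z"
  shows "nullB (Y \<union> Z)"
proof -
  have "\<And>n::nat. nullB (if n = 0 then Y else Z)" using assms by simp
  then have "nullB (\<Union>n::nat. if n = 0 then Y else Z)" by (rule null_UN)
  moreover have "Y \<union> Z \<subseteq> (\<Union>n::nat. if n = 0 then Y else Z)"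
  proof -
    have "Y \<subseteq> (\<Union>n::nat. if n = 0 then Y else Z)" using UN_upper[of "0::nat" UNIV "\<lambda>n. if n = 0 then Y else Z"] by simp
    moreover have "Z \<subseteq> (\<Union>n::nat. if n = 0 then Y else Z)"
      using UN_upper[of "Suc 0" UNIV "\<lambda>n. if n = 0 then Y else Z"] by simp
    ultimately show ?thesis by blast
  qed
  ultimately show ?thesis by (rule null_sub[rotated])
qed

lemma inf_bot_le: "inf x y = bot \<longleftrightarrow> y \<le> - (x::'b::boolean_algebra)"
  by (metis inf_commute inf_shunt)

definition nxt :: "'b::boolean_algebra \<Rightarrow> (nat \<Rightarrow> 'b) \<Rightarrow> 'b" where
  "nxt c bs = (if inf c (lubs bs) = bot then c else inf c (bs (SOME k. inf c (bs k) \<noteq> bot)))"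

lemma nxt:
  assumes bsa: "boolean_sigma_algebra TYPE('b::boolean_algebra)" and c: "(c::'b) \<noteq> bot"
  shows "nxt c bs \<noteq> bot \<and> nxt c bs \<le> c \<and> stone_set (nxt c bs) \<inter> Dset bs = {}"
proof (cases "inf c (lubs bs) = bot")
  case True
  then have "stone_set c \<inter> stone_set (lubs bs) = {}" by (metis ss_inf ss_bot)
  then have "stone_set c \<inter> Dset bs = {}" unfolding Dset_def by blast
  then show ?thesis using True c unfolding nxt_def by simp
next
  case False
  have "\<exists>k. inf c (bs k) \<noteq> bot"
  proof (rule ccontr)
    assume "\<not> ?thesis"
    then have "\<forall>k. bs k \<le> - c" using inf_bot_le by metis
    then have "lubs bs \<le> - c" using lubs[OF bsa, of bs] unfolding is_lub_of_def by blast
    then show False using False inf_bot_le by metis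
  qed
  then have k: "inf c (bs (SOME k. inf c (bs k) \<noteq> bot)) \<noteq> bot" by (rule someI_ex)
  define k where "k = (SOME k. inf c (bs k) \<noteq> bot)"
  have e: "nxt c bs = inf c (bs k)" unfolding nxt_def k_def using False by simp
  have "stone_set (inf c (bs k)) \<subseteq> stone_set (bs k)" by (simp add: ss_mono)
  then have "stone_set (nxt c bs) \<inter> Dset bs = {}" unfolding e Dset_def by blast
  then show ?thesis using k unfolding e k_def by simp
qed

lemma baire_cat:
  assumes bsa: "boolean_sigma_algebra TYPE('b::boolean_algebra)" and n: "nullB (stone_set (c::'b))"
  shows "c = bot"
proof (rule ccontr)
  assume c: "c \<noteq> bot"
  from n obtain bss :: "nat \<Rightarrow> nat \<Rightarrow> 'b" where bss: "stone_set c \<subseteq> (\<Union>n. Dset (bss n))"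
    unfolding nullB_def by blast
  define cs where "cs = rec_nat c (\<lambda>n x. nxt x (bss n))"
  have cs0: "cs 0 = c" and csS: "\<And>n. cs (Suc n) = nxt (cs n) (bss n)" unfolding cs_def by simp_all
  have nb: "cs n \<noteq> bot" for n
    by (induction n) (use c nxt[OF bsa] in \<open>simp_all add: cs0 csS\<close>)
  have dec: "cs (Suc n) \<le> cs n" for n using nxt[OF bsa nb[of n]] csS by simp
  have decr: "m \<le> n \<Longrightarrow> cs n \<le> cs m" for m n
    by (rule lift_Suc_antimono_le[of cs, OF dec])
  have disj: "stone_set (cs (Suc n)) \<inter> Dset (bss n) = {}" for n
    using nxt[OF bsa nb[of n]] csS by simp
  define F where "F = {x. \<exists>n. cs n \<le> x}"
  have "pfilter F" unfolding pfilter_def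
  proof (intro conjI allI impI)
    show "top \<in> F" unfolding F_def by (blast intro: top_greatest)
    show "bot \<notin> F" unfolding F_def using nb bot_unique by blast
    fix x y
    show "x \<in> F \<and> x \<le> y \<Longrightarrow> y \<in> F" unfolding F_def by (auto intro: order_trans)
    assume "x \<in> F \<and> y \<in> F"
    then obtain n m where "cs n \<le> x" "cs m \<le> y" unfolding F_def by blast
    moreover have "cs (max n m) \<le> cs n" "cs (max n m) \<le> cs m" by (simp_all add: decr)
    ultimately have "cs (max n m) \<le> inf x y" by (meson le_inf_iff order_trans)
    then show "inf x y \<in> F" unfolding F_def by blast
  qed
  then obtain U where U: "ultrafilter_ba U" "F \<subseteq> U" using uf_extend by blast
  have "c \<in> U" using U cs0 unfolding F_def by blast
  then have "U \<in> stone_set c" using U unfolding stone_set_def by blast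
  then obtain n where n: "U \<in> Dset (bss n)" using bss by blast
  have "cs (Suc n) \<in> U" using U unfolding F_def by blast
  then have "U \<in> stone_set (cs (Suc n))" using U unfolding stone_set_def by blast
  then show False using n disj by blast
qed

definition pre :: "('a::boolean_algebra \<Rightarrow> 'b::boolean_algebra) \<Rightarrow> 'a set set \<Rightarrow> 'b set set" where
  "pre \<phi> X = {V. ultrafilter_ba V \<and> {a. \<phi> a \<in> V} \<in> X}"

definition rel :: "('a::boolean_algebra \<Rightarrow> 'b::boolean_algebra) \<Rightarrow> 'a set set \<Rightarrow> 'b \<Rightarrow> bool" where
  "rel \<phi> X b \<longleftrightarrow> nullB ((pre \<phi> X - stone_set b) \<union> (stone_set b - pre \<phi> X))"

lemma hom_mono: "ba_hom \<phi> \<Longrightarrow> x \<le> y \<Longrightarrow> \<phi> x \<le> \<phi> y"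
  unfolding ba_hom_def by (metis sup.absorb_iff2 sup.cobounded1)

lemma uf_pull:
  assumes h: "ba_hom \<phi>" and V: "ultrafilter_ba V"
  shows "ultrafilter_ba {a. \<phi> a \<in> V}"
  unfolding ultrafilter_ba_def
proof (intro conjI allI impI)
  show "top \<in> {a. \<phi> a \<in> V}" using h V uf_top unfolding ba_hom_def by fastforce
  show "bot \<notin> {a. \<phi> a \<in> V}" using h V uf_bot unfolding ba_hom_def by fastforce
  fix x y
  show "x \<in> {a. \<phi> a \<in> V} \<and> x \<le> y \<Longrightarrow> y \<in> {a. \<phi> a \<in> V}"
    using hom_mono[OF h] uf_mono[OF V] by blast
  show "x \<in> {a. \<phi> a \<in> V} \<and> y \<in> {a. \<phi> a \<in> V} \<Longrightarrow> inf x y \<in> {a. \<phi> a \<in> V}"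
    using h uf_inf[OF V] unfolding ba_hom_def by simp
  show "x \<in> {a. \<phi> a \<in> V} \<or> - x \<in> {a. \<phi> a \<in> V}"
    using h uf_compl[OF V] unfolding ba_hom_def by simp
qed

lemma pre_ss: "ba_hom \<phi> \<Longrightarrow> pre \<phi> (stone_set a) = stone_set (\<phi> a)"
  unfolding pre_def stone_set_def using uf_pull by fastforce

lemma pre_sub: "pre \<phi> X \<subseteq> {V. ultrafilter_ba V}"
  unfolding pre_def by blast

lemma pre_compl: "ba_hom \<phi> \<Longrightarrow> pre \<phi> ({U. ultrafilter_ba U} - X) = {V. ultrafilter_ba V} - pre \<phi> X"
  unfolding pre_def using uf_pull by fastforce

lemma pre_Un: "pre \<phi> (X \<union> Y) = pre \<phi> X \<union> pre \<phi> Y"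
  unfolding pre_def by blast
lemma pre_Int: "pre \<phi> (X \<inter> Y) = pre \<phi> X \<inter> pre \<phi> Y"
  unfolding pre_def by blast
lemma pre_UN: "pre \<phi> (\<Union>n. X n) = (\<Union>n. pre \<phi> (X n))"
  unfolding pre_def by blast
lemma pre_empty: "pre \<phi> {} = {}"
  unfolding pre_def by blast

lemma rel_ss: "ba_hom \<phi> \<Longrightarrow> rel \<phi> (stone_set a) (\<phi> a)"
  unfolding rel_def by (simp add: pre_ss null_empty)

lemma rel_empty: "rel \<phi> {} bot"
  unfolding rel_def by (simp add: pre_empty ss_bot null_empty)

lemma rel_compl:
  assumes h: "ba_hom \<phi>" and r: "rel \<phi> X b"
  shows "rel \<phi> ({U. ultrafilter_ba U} - X) (- b)"
proof -
  have "(pre \<phi> ({U. ultrafilter_ba U} - X) - stone_set (- b)) \<union> (stone_set (- b) - pre \<phi> ({U. ultrafilter_ba U} - X))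
      = (pre \<phi> X - stone_set b) \<union> (stone_set b - pre \<phi> X)"
    unfolding pre_compl[OF h] ss_compl using pre_sub[of \<phi> X] ss_sub[of b] by blast
  then show ?thesis using r unfolding rel_def by simp
qed

lemma rel_Un:
  assumes "rel \<phi> X b" "rel \<phi> Y c"
  shows "rel \<phi> (X \<union> Y) (sup b c)"
proof -
  have "(pre \<phi> (X \<union> Y) - stone_set (sup b c)) \<union> (stone_set (sup b c) - pre \<phi> (X \<union> Y))
     \<subseteq> ((pre \<phi> X - stone_set b) \<union> (stone_set b - pre \<phi> X)) \<union> ((pre \<phi> Y - stone_set c) \<union> (stone_set c - pre \<phi> Y))"
    unfolding pre_Un ss_sup by blast
  then show ?thesis using assms unfolding rel_def by (meson null_Un null_sub)
qed

lemma rel_Int: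
  assumes "rel \<phi> X b" "rel \<phi> Y c"
  shows "rel \<phi> (X \<inter> Y) (inf b c)"
proof -
  have "(pre \<phi> (X \<inter> Y) - stone_set (inf b c)) \<union> (stone_set (inf b c) - pre \<phi> (X \<inter> Y))
     \<subseteq> ((pre \<phi> X - stone_set b) \<union> (stone_set b - pre \<phi> X)) \<union> ((pre \<phi> Y - stone_set c) \<union> (stone_set c - pre \<phi> Y))"
    unfolding pre_Int ss_inf by blast
  then show ?thesis using assms unfolding rel_def by (meson null_Un null_sub)
qed

lemma rel_UN:
  assumes bsa: "boolean_sigma_algebra TYPE('b::boolean_algebra)"
    and r: "\<And>n. rel (\<phi>::'a::boolean_algebra \<Rightarrow> 'b) (X n) (bs n)"
  shows "rel \<phi> (\<Union>n. X n) (lubs bs)"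
proof -
  have le: "stone_set (bs n) \<subseteq> stone_set (lubs bs)" for n
    using lubs[OF bsa, of bs] unfolding is_lub_of_def by (simp add: ss_mono)
  have "(pre \<phi> (\<Union>n. X n) - stone_set (lubs bs)) \<union> (stone_set (lubs bs) - pre \<phi> (\<Union>n. X n))
     \<subseteq> (\<Union>n. (pre \<phi> (X n) - stone_set (bs n)) \<union> (stone_set (bs n) - pre \<phi> (X n))) \<union> Dset bs"
    unfolding pre_UN Dset_def using le by blast
  moreover have "nullB ((\<Union>n. (pre \<phi> (X n) - stone_set (bs n)) \<union> (stone_set (bs n) - pre \<phi> (X n))) \<union> Dset bs)"
  proof (rule null_Un[OF _ null_D])
    have "\<And>n. nullB ((pre \<phi> (X n) - stone_set (bs n)) \<union> (stone_set (bs n) - pre \<phi> (X n)))"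
      using r unfolding rel_def by blast
    then show "nullB (\<Union>n. (pre \<phi> (X n) - stone_set (bs n)) \<union> (stone_set (bs n) - pre \<phi> (X n)))"
      by (rule null_UN)
  qed
  ultimately show ?thesis unfolding rel_def by (rule null_sub)
qed

lemma rel_unique:
  assumes bsa: "boolean_sigma_algebra TYPE('b::boolean_algebra)"
    and r: "rel (\<phi>::'a::boolean_algebra \<Rightarrow> 'b) X b" "rel \<phi> X b'"
  shows "b = b'"
proof -
  have n: "nullB (((pre \<phi> X - stone_set b) \<union> (stone_set b - pre \<phi> X)) \<union> ((pre \<phi> X - stone_set b') \<union> (stone_set b' - pre \<phi> X)))"
    using r unfolding rel_def by (rule null_Un)
  have "stone_set (inf b (- b')) \<subseteq> ((pre \<phi> X - stone_set b) \<union> (stone_set b - pre \<phi> X)) \<union> ((pre \<phi> X - stone_set b') \<union> (stone_set b' - pre \<phi> X))"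
    unfolding ss_inf ss_compl by blast
  then have "inf b (- b') = bot" using baire_cat[OF bsa] null_sub n by blast
  then have 1: "b \<le> b'" by (simp add: inf_shunt)
  have "stone_set (inf b' (- b)) \<subseteq> ((pre \<phi> X - stone_set b) \<union> (stone_set b - pre \<phi> X)) \<union> ((pre \<phi> X - stone_set b') \<union> (stone_set b' - pre \<phi> X))"
    unfolding ss_inf ss_compl by blast
  then have "inf b' (- b) = bot" using baire_cat[OF bsa] null_sub n by blast
  then have 2: "b' \<le> b" by (simp add: inf_shunt)
  from 1 2 show ?thesis by (rule order_antisym)
qed

lemma rel_sigma:
  assumes bsa: "boolean_sigma_algebra TYPE('b::boolean_algebra)" and h: "ba_hom (\<phi>::'a::boolean_algebra \<Rightarrow> 'b)"
    and X: "X \<in> sigma_sets {U::'a set. ultrafilter_ba U} (range stone_set)"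
  shows "\<exists>b. rel \<phi> X b"
  using X
proof (induction)
  case (Basic a)
  then show ?case using rel_ss[OF h] by blast
next
  case Empty
  then show ?case using rel_empty by blast
next
  case (Compl a)
  then show ?case using rel_compl[OF h] by blast
next
  case (Union A)
  then obtain bs where "\<And>n. rel \<phi> (A n) (bs n)" by metis
  then show ?case using rel_UN[OF bsa] by blast
qed


theorem proposition2p22:
  fixes \<phi> :: "'a::boolean_algebra \<Rightarrow> 'b::boolean_algebra"
  assumes "boolean_sigma_algebra TYPE('b)"
    and "ba_hom \<phi>"
  shows "\<exists>\<Phi>. sigma_hom (topspace (stone_space TYPE('a))) (baire_envelope TYPE('a)) \<Phi>
            \<and> (\<forall>a. \<Phi> (stone_set a) = \<phi> a)
            \<and> (\<forall>\<Psi>. sigma_hom (topspace (stone_space TYPE('a))) (baire_envelope TYPE('a)) \<Psi>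
                   \<and> (\<forall>a. \<Psi> (stone_set a) = \<phi> a)
                   \<longrightarrow> (\<forall>X\<in>baire_envelope TYPE('a). \<Psi> X = \<Phi> X))"
proof -
  note bsa = assms(1) and h = assms(2)
  let ?S = "{U::'a set. ultrafilter_ba U}"
  let ?M = "baire_envelope TYPE('a)"
  define \<Phi> where "\<Phi> X = (THE b. rel \<phi> X b)" for X
  have PhiI: "rel \<phi> X b \<Longrightarrow> \<Phi> X = b" for X b
    unfolding \<Phi>_def using rel_unique[OF bsa] by blast
  have M: "?M = sigma_sets ?S (range stone_set)" by (rule baire_eq)
  have relM: "X \<in> ?M \<Longrightarrow> rel \<phi> X (\<Phi> X)" for X
  proof -
    assume "X \<in> ?M"
    then obtain b where "rel \<phi> X b" using rel_sigma[OF bsa h] M by blast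
    then show ?thesis using PhiI by simp
  qed
  have Phi_empty: "\<Phi> {} = bot" using PhiI rel_empty by blast
  have "sigma_hom ?S ?M \<Phi>"
    unfolding sigma_hom_def
  proof (intro conjI ballI allI impI)
    fix X Y assume X: "X \<in> ?M" and Y: "Y \<in> ?M"
    show "\<Phi> (X \<union> Y) = sup (\<Phi> X) (\<Phi> Y)" by (rule PhiI, rule rel_Un[OF relM[OF X] relM[OF Y]])
    show "\<Phi> (X \<inter> Y) = inf (\<Phi> X) (\<Phi> Y)" by (rule PhiI, rule rel_Int[OF relM[OF X] relM[OF Y]])
  next
    fix X assume X: "X \<in> ?M"
    show "\<Phi> (?S - X) = - \<Phi> X" by (rule PhiI, rule rel_compl[OF h relM[OF X]])
  next
    show "\<Phi> {} = bot" by (fact Phi_empty)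
  next
    have "rel \<phi> (?S - {}) (- bot)" by (rule rel_compl[OF h rel_empty])
    then show "\<Phi> ?S = top" using PhiI by simp
  next
    fix C assume C: "countable C \<and> C \<subseteq> ?M"
    show "is_lub_of (\<Phi> ` C) (\<Phi> (\<Union> C))"
    proof (cases "C = {}")
      case True
      then show ?thesis using Phi_empty unfolding is_lub_of_def by simp
    next
      case False
      define X where "X = from_nat_into C"
      have rX: "range X = C" unfolding X_def using C False by (simp add: range_from_nat_into)
      define bs where "bs n = \<Phi> (X n)" for n
      have "rel \<phi> (X n) (bs n)" for n
        unfolding bs_def using C rX by (intro relM) blast
      then have "rel \<phi> (\<Union>n. X n) (lubs bs)" by (rule rel_UN[OF bsa])
      then have e: "\<Phi> (\<Union> C) = lubs bs" using PhiI rX by blast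
      have "\<Phi> ` C = range bs" unfolding bs_def rX[symmetric] by auto
      then show ?thesis using e lubs[OF bsa, of bs] by simp
    qed
  qed
  moreover have "\<forall>a. \<Phi> (stone_set a) = \<phi> a" using PhiI rel_ss[OF h] by blast
  moreover have "\<forall>\<Psi>. sigma_hom ?S ?M \<Psi> \<and> (\<forall>a. \<Psi> (stone_set a) = \<phi> a)
                   \<longrightarrow> (\<forall>X\<in>?M. \<Psi> X = \<Phi> X)"
  proof (intro allI impI ballI)
    fix \<Psi> X assume H: "sigma_hom ?S ?M \<Psi> \<and> (\<forall>a. \<Psi> (stone_set a) = \<phi> a)" and X: "X \<in> ?M"
    from H have sh: "sigma_hom ?S ?M \<Psi>" and ext: "\<forall>a. \<Psi> (stone_set a) = \<phi> a" by auto
    have "X \<in> sigma_sets ?S (range stone_set)" using X M by simp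
    then show "\<Psi> X = \<Phi> X"
    proof (induction)
      case (Basic a)
      then obtain c where "a = stone_set c" by blast
      moreover have "\<Phi> (stone_set c) = \<phi> c" by (rule PhiI, rule rel_ss[OF h])
      ultimately show ?case using ext by simp
    next
      case Empty
      then show ?case using sh Phi_empty unfolding sigma_hom_def by simp
    next
      case (Compl a)
      have aM: "a \<in> ?M" using Compl.hyps M by simp
      have "\<Psi> (?S - a) = - \<Psi> a" using sh aM unfolding sigma_hom_def top_stone by blast
      moreover have "\<Phi> (?S - a) = - \<Phi> a" by (rule PhiI, rule rel_compl[OF h relM[OF aM]])
      ultimately show ?case using Compl.IH by simp
    next
      case (Union A)
      have AM: "range A \<subseteq> ?M" using Union.hyps M by auto
      have c: "countable (range A)" by simp
      have l1: "is_lub_of (\<Psi> ` range A) (\<Psi> (\<Union> (range A)))"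
        using sh AM c unfolding sigma_hom_def by blast
      have l2: "is_lub_of (\<Phi> ` range A) (\<Phi> (\<Union> (range A)))"
        using \<open>sigma_hom ?S ?M \<Phi>\<close> AM c unfolding sigma_hom_def by blast
      have "\<Psi> ` range A = \<Phi> ` range A" using Union.IH by (auto simp: image_iff)
      then show ?case using l1 l2 lub_unique by metis
    qed
  qed
  ultimately show ?thesis unfolding top_stone by blast
qed

end
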